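(* Let $r,s,t,\ell,m$ be integers with $1 \le t \le \ell \le m$, $1 \le r < \ell$ and $1 \le s \le t$. Then $$\mathfrak w_r^{(s)}(t;\ell,m)=q^t\,\mathfrak w^{(s)}_r(t;\ell-1,m)+(q^m-q^{t-1})\,\mathfrak w^{(s)}_r(t-1;\ell-1,m)$$ and $$\mathfrak w_r(t;\ell,m)=q^t\,\mathfrak w_r(t;\ell-1,m)+(q^m-q^{t-1})\,\mathfrak w_r(t-1;\ell-1,m).$$
   Context: $q$ is a prime power. For an $a\times b$ matrix $M=(m_{ij})$ over $\mathbb{F}_q$ and $1\le r\le a$, $\tau_r(M)=m_{11}+\cdots+m_{rr}$ and $\underline{M}_r$ is the $r\times b$ matrix of the first $r$ rows of $M$. For integers $t\ge 0$ and $s\ge 1$, $\mathfrak w_r(t;a,b)$ is the number of $a\times b$ matrices $M$ over $\mathbb{F}_q$ with $\mathrm{rk}(M)=t$ and $\tau_r(M)\ne0$, and $\mathfrak w^{(s)}_r(t;a,b)$ is the number of such matrices that additionally satisfy $\mathrm{rk}(\underline{M}_r)=s$ (these counts are $0$ when no such matrices exist, e.g. when $t=0$ or $t>\min(a,b)$). *)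

theory Defs
  imports "Jordan_Normal_Form.DL_Rank"
begin

text \<open>Matrices over a finite field 'a (so q = CARD('a) is a prime power).
  Rank is the library rank (dimension of the column space).\<close>

definition mrank :: "'a::field mat \<Rightarrow> nat" where
  "mrank M = vec_space.rank (dim_row M) M"

text \<open>tau_r(M) = m_11 + ... + m_rr (0-indexed in Isabelle)\<close>
definition tau :: "nat \<Rightarrow> 'a::field mat \<Rightarrow> 'a" where
  "tau r M = (\<Sum>i<r. M $$ (i, i))"

definition top_rows :: "nat \<Rightarrow> 'a::field mat \<Rightarrow> 'a mat" where
  "top_rows r M = mat r (dim_col M) (\<lambda>(i, j). M $$ (i, j))"

definition w_count :: "'a::{finite,field} itself \<Rightarrow> nat \<Rightarrow> nat \<Rightarrow> nat \<Rightarrow> nat \<Rightarrow> nat" where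
  "w_count _ r t a b = card {M :: 'a mat. M \<in> carrier_mat a b \<and> mrank M = t \<and> tau r M \<noteq> 0}"

definition ws_count :: "'a::{finite,field} itself \<Rightarrow> nat \<Rightarrow> nat \<Rightarrow> nat \<Rightarrow> nat \<Rightarrow> nat \<Rightarrow> nat" where
  "ws_count _ r s t a b = card {M :: 'a mat. M \<in> carrier_mat a b \<and> mrank M = t \<and> tau r M \<noteq> 0
      \<and> mrank (top_rows r M) = s}"

end

theory Submission imports Defs begin

context vec_space begin

definition Dm :: "'a vec set \<Rightarrow> nat" where
  "Dm S = vectorspace.dim class_ring (vs (span S))"

lemma Dm_basis:
  assumes S: "S \<subseteq> carrier_vec n" and U: "U \<subseteq> carrier_vec n" "finite U" "lin_indpt U"
    and US: "U \<subseteq> span S" and SU: "S \<subseteq> span U"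
  shows "Dm S = card U"
proof -
  have sub: "submodule class_ring (span S) V" using span_is_submodule[OF S] .
  have vs: "vectorspace class_ring (vs (span S))"
    using field.field_axioms vectorspace_def submodule_is_module[OF sub] by metis
  have eq: "span U = span S"
    using span_is_subset[OF US sub] span_is_subset[OF SU span_is_submodule[OF U(1)]] by blast
  have "LinearCombinations.module.span class_ring (vs (span S)) U = span S"
    using span_li_not_depend(1)[OF US sub] eq by simp
  moreover have "LinearCombinations.module.lin_indpt class_ring (vs (span S)) U"
    using span_li_not_depend(2)[OF US sub] U by simp
  ultimately have "vectorspace.basis class_ring (vs (span S)) U"
    using vectorspace.basis_def[OF vs] US by simp
  then show ?thesis unfolding Dm_def using vectorspace.dim_basis[OF vs U(2)] by simp
qed

lemma basis_exists:
  assumes S: "S \<subseteq> carrier_vec n" "finite S"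
  shows "\<exists>U. U \<subseteq> S \<and> finite U \<and> lin_indpt U \<and> S \<subseteq> span U"
proof -
  have "lin_indpt {}" unfolding lin_dep_def by auto
  then obtain U where U: "finite U" "maximal U (\<lambda>T. T \<subseteq> S \<and> lin_indpt T)"
    using maximal_exists_superset[of S "\<lambda>T. T \<subseteq> S \<and> lin_indpt T" "{}"] S by auto
  have US: "U \<subseteq> S" "lin_indpt U" using U(2) unfolding maximal_def by auto
  have "S \<subseteq> span U"
  proof
    fix s assume s: "s \<in> S"
    show "s \<in> span U"
    proof (rule ccontr)
      assume ns: "s \<notin> span U"
      have Uc: "U \<subseteq> carrier_vec n" using US S by auto
      have "s \<notin> U" using ns in_own_span[OF Uc] by auto
      then have "lin_indpt (U \<union> {s})" using lin_dep_iff_in_span[OF Uc US(2)] ns s S by auto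
      moreover have "U \<subseteq> U \<union> {s}" "U \<union> {s} \<subseteq> S" using US s by auto
      ultimately have "U \<union> {s} = U" using U(2) unfolding maximal_def by blast
      then show False using \<open>s \<notin> U\<close> by auto
    qed
  qed
  then show ?thesis using US U by auto
qed

lemma Dm_insert:
  assumes S: "S \<subseteq> carrier_vec n" "finite S" and v: "v \<in> carrier_vec n"
  shows "v \<in> span S \<Longrightarrow> Dm (insert v S) = Dm S"
    and "v \<notin> span S \<Longrightarrow> Dm (insert v S) = Suc (Dm S)"
proof -
  obtain U where U: "U \<subseteq> S" "finite U" "lin_indpt U" "S \<subseteq> span U"
    using basis_exists[OF S] by auto
  have Uc: "U \<subseteq> carrier_vec n" using U S by auto
  have DS: "Dm S = card U" using Dm_basis[OF S(1) Uc U(2,3)] U in_own_span[OF S(1)] by auto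
  have spUS: "span S \<subseteq> span U" using span_is_subset[OF U(4) span_is_submodule[OF Uc]] .
  have spSU: "span U \<subseteq> span S" using span_is_monotone[OF U(1)] .
  have iS: "insert v S \<subseteq> carrier_vec n" using S v by auto
  {
    assume vin: "v \<in> span S"
    have "insert v S \<subseteq> span U" using vin spUS U(4) by auto
    moreover have "U \<subseteq> span (insert v S)"
      using U(1) in_own_span[OF iS] by auto
    ultimately show "Dm (insert v S) = Dm S" using Dm_basis[OF iS Uc U(2,3)] DS by auto
  }
  {
    assume vn: "v \<notin> span S"
    have vU: "v \<notin> span U" using vn spSU by auto
    have "v \<notin> U" using vU in_own_span[OF Uc] by auto
    have li: "lin_indpt (U \<union> {v})" using lin_dep_iff_in_span[OF Uc U(3) v \<open>v \<notin> U\<close>] vU by auto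
    have iU: "insert v U \<subseteq> carrier_vec n" using Uc v by auto
    have "span U \<subseteq> span (insert v U)" by (rule span_is_monotone) auto
    then have "insert v S \<subseteq> span (insert v U)" using U(4) in_own_span[OF iU] by auto
    moreover have "insert v U \<subseteq> span (insert v S)" using U(1) in_own_span[OF iS] by auto
    ultimately have "Dm (insert v S) = card (insert v U)"
      using Dm_basis[OF iS iU] U(2) li by auto
    then show "Dm (insert v S) = Suc (Dm S)" using DS \<open>v \<notin> U\<close> U(2) by auto
  }
qed


lemma Dm_le_insert:
  assumes S: "S \<subseteq> carrier_vec n" "finite S" and v: "v \<in> carrier_vec n"
  shows "Dm S \<le> Dm (insert v S)"
  using Dm_insert[OF S v] by (cases "v \<in> span S") auto

lemma Dm_empty: "Dm {} = 0" unfolding Dm_def using dim_zero_vs .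

lemma Dm_le_card:
  assumes "S \<subseteq> carrier_vec n" "finite S"
  shows "Dm S \<le> card S"
  using assms(2,1)
proof (induction S rule: finite_induct)
  case empty then show ?case by (simp add: Dm_empty)
next
  case (insert x F)
  then have "Dm (insert x F) \<le> Suc (Dm F)" using Dm_insert[of F x] by (cases "x \<in> span F") auto
  then show ?case using insert by auto
qed

lemma Dm_le_Un:
  assumes "S \<subseteq> carrier_vec n" "finite S" "T \<subseteq> carrier_vec n" "finite T"
  shows "Dm S \<le> Dm (T \<union> S)"
  using assms(4,3)
proof (induction T rule: finite_induct)
  case empty then show ?case by simp
next
  case (insert x F)
  then have "Dm (F \<union> S) \<le> Dm (insert x (F \<union> S))"
    using Dm_le_insert[of "F \<union> S" x] assms by auto
  then show ?case using insert by auto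
qed

lemma Dm_Un_span:
  assumes "S \<subseteq> carrier_vec n" "finite S" "T \<subseteq> carrier_vec n" "finite T" "S \<subseteq> span T"
  shows "Dm (S \<union> T) = Dm T"
  using assms(2,1,5)
proof (induction S rule: finite_induct)
  case empty then show ?case by simp
next
  case (insert x F)
  have "x \<in> span (F \<union> T)" using insert span_is_monotone[of T "F \<union> T"] by auto
  then have "Dm (insert x (F \<union> T)) = Dm (F \<union> T)"
    using Dm_insert(1)[of "F \<union> T" x] insert assms by auto
  then show ?case using insert by auto
qed

lemma Dm_mono_span:
  assumes "S \<subseteq> carrier_vec n" "finite S" "T \<subseteq> carrier_vec n" "finite T" "S \<subseteq> span T"
  shows "Dm S \<le> Dm T"
  using Dm_le_Un[OF assms(1-4)] Dm_Un_span[OF assms] by (simp add: Un_commute)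

lemma lincomb_bij:
  assumes U: "U \<subseteq> carrier_vec n" "finite U" "lin_indpt U"
  shows "bij_betw (\<lambda>a. lincomb a U) (PiE U (\<lambda>_. UNIV)) (span U)"
  unfolding bij_betw_def
proof
  show "inj_on (\<lambda>a. lincomb a U) (PiE U (\<lambda>_. UNIV))"
  proof (rule inj_onI)
    fix a b assume a: "a \<in> PiE U (\<lambda>_. UNIV)" and b: "b \<in> PiE U (\<lambda>_. UNIV)"
      and eq: "lincomb a U = lincomb b U"
    have "lincomb (\<lambda>v. a v - b v) U = lincomb a U \<ominus>\<^bsub>V\<^esub> lincomb b U"
      using lincomb_diff[OF U(2,1)] .
    also have "\<dots> = 0\<^sub>v n" using eq lincomb_closed[OF U(1)] U(2)
      using lincomb_closed[OF U(1)] by (simp add: a_minus_def M.r_neg)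
    finally have z: "lincomb (\<lambda>v. a v - b v) U = 0\<^sub>v n" .
    have *: "\<forall>v\<in>U. a v - b v = 0"
    proof (rule ccontr)
      assume "\<not> (\<forall>v\<in>U. a v - b v = 0)"
      then obtain v where "v \<in> U" "a v - b v \<noteq> 0" by auto
      then have "lin_dep U" using lin_dep_crit[OF U(2) subset_refl _ _ _ z] by auto
      then show False using U(3) by auto
    qed
    show "a = b" by (rule PiE_ext[OF a b]) (use * in auto)
  qed
  show "(\<lambda>a. lincomb a U) ` PiE U (\<lambda>_. UNIV) = span U"
  proof
    show "(\<lambda>a. lincomb a U) ` PiE U (\<lambda>_. UNIV) \<subseteq> span U"
      using finite_span[OF U(2,1)] by auto
    show "span U \<subseteq> (\<lambda>a. lincomb a U) ` PiE U (\<lambda>_. UNIV)"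
    proof
      fix x assume "x \<in> span U"
      then obtain a where x: "x = lincomb a U" using finite_span[OF U(2,1)] by auto
      have "x = lincomb (restrict a U) U" unfolding x by (rule lincomb_cong) (use U in auto)
      then show "x \<in> (\<lambda>a. lincomb a U) ` PiE U (\<lambda>_. UNIV)" by auto
    qed
  qed
qed


lemma rank_Dm: "rank A = Dm (set (cols A))" unfolding rank_def Dm_def ..

end

lemma rank_le_rows:
  fixes A :: "'a::field mat"
  assumes A: "A \<in> carrier_mat na m"
  shows "vec_space.rank na A \<le> vec_space.Dm m (set (rows A))"
proof -
  interpret Vm: vec_space "TYPE('a)" m .
  interpret Va: vec_space "TYPE('a)" na .
  have R: "set (rows A) \<subseteq> carrier_vec m" "finite (set (rows A))" using A by (auto simp: rows_def)
  obtain U where U: "U \<subseteq> set (rows A)" "finite U" "Vm.lin_indpt U" "set (rows A) \<subseteq> Vm.span U"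
    using Vm.basis_exists[OF R] by auto
  have Uc: "U \<subseteq> carrier_vec m" using U R by auto
  have DU: "Vm.Dm (set (rows A)) = card U"
    using Vm.Dm_basis[OF R(1) Uc U(2,3)] U Vm.in_own_span[OF R(1)] by auto
  have "\<forall>i. \<exists>ci. i < na \<longrightarrow> row A i = Vm.lincomb ci U"
  proof
    fix i
    show "\<exists>ci. i < na \<longrightarrow> row A i = Vm.lincomb ci U"
    proof (cases "i < na")
      case True
      then have "row A i \<in> Vm.span U" using U(4) A by (auto simp: rows_def)
      then show ?thesis using Vm.finite_span[OF U(2) Uc] by auto
    qed auto
  qed
  then obtain c where c: "\<And>i. i < na \<Longrightarrow> row A i = Vm.lincomb (c i) U" by metis
  obtain us where us: "set us = U" "distinct us" using finite_distinct_list[OF U(2)] by auto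
  define w where "w u = vec na (\<lambda>i. c i u)" for u
  define W where "W = w ` U"
  have Wc: "W \<subseteq> carrier_vec na" "finite W" using U(2) by (auto simp: W_def w_def)
  have colj: "col A j = Va.sumlist (map (\<lambda>u. (u $ j) \<cdot>\<^sub>v w u) us)" if j: "j < m" for j
  proof (rule eq_vecI)
    have car: "\<And>x. x \<in> set (map (\<lambda>u. (u $ j) \<cdot>\<^sub>v w u) us) \<Longrightarrow> x \<in> carrier_vec na"
      by (auto simp: w_def)
    have dd: "dim_vec (Va.sumlist (map (\<lambda>u. (u $ j) \<cdot>\<^sub>v w u) us)) = na"
      by (rule Va.sumlist_dim) (rule car)
    show "dim_vec (col A j) = dim_vec (Va.sumlist (map (\<lambda>u. (u $ j) \<cdot>\<^sub>v w u) us))"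
      using dd A by auto
    fix i assume "i < dim_vec (Va.sumlist (map (\<lambda>u. (u $ j) \<cdot>\<^sub>v w u) us))"
    then have i: "i < na"
      using dd by auto
    have "col A j $ i = row A i $ j" using i j A by auto
    also have "\<dots> = (\<Sum>u\<in>U. c i u * u $ j)" using c[OF i] Vm.lincomb_index[OF j Uc] by simp
    also have "\<dots> = sum_list (map (\<lambda>u. c i u * u $ j) us)"
      using us by (simp add: sum_list_distinct_conv_sum_set)
    also have "\<dots> = sum_list (map (\<lambda>x. x $ i) (map (\<lambda>u. (u $ j) \<cdot>\<^sub>v w u) us))"
      using i by (simp add: w_def o_def mult.commute)
    also have "\<dots> = Va.sumlist (map (\<lambda>u. (u $ j) \<cdot>\<^sub>v w u) us) $ i"
      by (rule Va.sumlist_vec_index[symmetric]) (rule car, assumption, rule i)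
    finally show "col A j $ i = Va.sumlist (map (\<lambda>u. (u $ j) \<cdot>\<^sub>v w u) us) $ i" .
  qed
  have "set (cols A) \<subseteq> Va.span W"
  proof
    fix x assume "x \<in> set (cols A)"
    then obtain j where j: "j < m" "x = col A j" using A by (auto simp: cols_def)
    have "Va.sumlist (map (\<lambda>u. (u $ j) \<cdot>\<^sub>v w u) us) \<in> Va.span W"
    proof (rule Va.sumlist_in_span[OF Wc(1)])
      fix y assume "y \<in> set (map (\<lambda>u. (u $ j) \<cdot>\<^sub>v w u) us)"
      then obtain u where u: "u \<in> U" "y = (u $ j) \<cdot>\<^sub>v w u" using us by auto
      have "w u \<in> Va.span W" using u Va.in_own_span[OF Wc(1)] by (auto simp: W_def)
      then show "y \<in> Va.span W" using Va.smult_in_span[OF Wc(1)] u by auto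
    qed
    then show "x \<in> Va.span W" using colj j by auto
  qed
  moreover have "set (cols A) \<subseteq> carrier_vec na" using A by (auto simp: cols_def)
  ultimately have "Va.Dm (set (cols A)) \<le> Va.Dm W"
    using Va.Dm_mono_span[OF _ _ Wc] by blast
  also have "\<dots> \<le> card W" using Va.Dm_le_card[OF Wc] .
  also have "\<dots> \<le> card U" unfolding W_def using card_image_le[OF U(2)] .
  finally show ?thesis using DU Va.rank_Dm by simp
qed


lemma rank_transpose:
  fixes A :: "'a::field mat"
  assumes A: "A \<in> carrier_mat na m"
  shows "vec_space.rank na A = vec_space.rank m (transpose_mat A)"
proof -
  have At: "transpose_mat A \<in> carrier_mat m na" using A by auto
  have 1: "vec_space.rank na A \<le> vec_space.rank m (transpose_mat A)"
    using rank_le_rows[OF A] vec_space.rank_Dm[of m "transpose_mat A"] by simp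
  have 2: "vec_space.rank m (transpose_mat A) \<le> vec_space.rank na A"
    using rank_le_rows[OF At] vec_space.rank_Dm[of na A] by simp
  from 1 2 show ?thesis by simp
qed

lemma mrank_rows:
  fixes M :: "'a::field mat"
  assumes M: "M \<in> carrier_mat na m"
  shows "mrank M = vec_space.Dm m (set (rows M))"
proof -
  have "mrank M = vec_space.rank na M" unfolding mrank_def using M by simp
  also have "\<dots> = vec_space.rank m (transpose_mat M)" by (rule rank_transpose[OF M])
  also have "\<dots> = vec_space.Dm m (set (rows M))" using vec_space.rank_Dm[of m "transpose_mat M"] by simp
  finally show ?thesis .
qed


context vec_space begin

lemma card_span:
  assumes fin: "finite (UNIV::'a set)" and R: "R \<subseteq> carrier_vec n" "finite R"
  shows "card (span R) = card (UNIV::'a set) ^ Dm R"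
proof -
  obtain U where U: "U \<subseteq> R" "finite U" "lin_indpt U" "R \<subseteq> span U"
    using basis_exists[OF R] by auto
  have Uc: "U \<subseteq> carrier_vec n" using U R by auto
  have DR: "Dm R = card U" using Dm_basis[OF R(1) Uc U(2,3)] U in_own_span[OF R(1)] by auto
  have "span R \<subseteq> span U" using span_is_subset[OF U(4) span_is_submodule[OF Uc]] .
  moreover have "span U \<subseteq> span R" using span_is_monotone[OF U(1)] .
  ultimately have eq: "span R = span U" by auto
  have "card (span U) = card (PiE U (\<lambda>_. UNIV::'a set))"
    using bij_betw_same_card[OF lincomb_bij[OF Uc U(2,3)]] by simp
  also have "\<dots> = card (UNIV::'a set) ^ card U" by (simp add: card_PiE U(2))
  finally show ?thesis using eq DR by simp
qed

lemma card_carrier_vec_loc: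
  assumes fin: "finite (UNIV::'a set)"
  shows "card (carrier_vec n :: 'a vec set) = card (UNIV::'a set) ^ n" "finite (carrier_vec n :: 'a vec set)"
proof -
  have b: "bij_betw (\<lambda>v. restrict (\<lambda>i. v $ i) {0..<n}) (carrier_vec n :: 'a vec set) (PiE {0..<n} (\<lambda>_. UNIV::'a set))"
    unfolding bij_betw_def
  proof
    show "inj_on (\<lambda>v. restrict (\<lambda>i. v $ i) {0..<n}) (carrier_vec n :: 'a vec set)"
    proof (rule inj_onI)
      fix x y :: "'a vec" assume xy: "x \<in> carrier_vec n" "y \<in> carrier_vec n"
        and eq: "restrict (\<lambda>i. x $ i) {0..<n} = restrict (\<lambda>i. y $ i) {0..<n}"
      show "x = y"
      proof (rule eq_vecI)
        fix i assume "i < dim_vec y"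
        then have "i \<in> {0..<n}" using xy by auto
        then show "x $ i = y $ i" using fun_cong[OF eq, of i] by simp
      qed (use xy in auto)
    qed
    show "(\<lambda>v. restrict (\<lambda>i. v $ i) {0..<n}) ` carrier_vec n = PiE {0..<n} (\<lambda>_. UNIV::'a set)"
    proof
      show "(\<lambda>v. restrict (\<lambda>i. v $ i) {0..<n}) ` carrier_vec n \<subseteq> PiE {0..<n} (\<lambda>_. UNIV::'a set)" by auto
      show "PiE {0..<n} (\<lambda>_. UNIV::'a set) \<subseteq> (\<lambda>v. restrict (\<lambda>i. v $ i) {0..<n}) ` carrier_vec n"
      proof
        fix f assume f: "f \<in> PiE {0..<n} (\<lambda>_. UNIV::'a set)"
        have "f = restrict (\<lambda>i. vec n f $ i) {0..<n}"
          using f by (auto simp: fun_eq_iff PiE_def extensional_def restrict_def)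
        then show "f \<in> (\<lambda>v. restrict (\<lambda>i. v $ i) {0..<n}) ` carrier_vec n"
          by (intro image_eqI[of _ _ "vec n f"]) auto
      qed
    qed
  qed
  show "card (carrier_vec n :: 'a vec set) = card (UNIV::'a set) ^ n"
    using bij_betw_same_card[OF b] by (simp add: card_PiE)
  show "finite (carrier_vec n :: 'a vec set)"
    using bij_betw_finite[OF b] fin by (simp add: finite_PiE)
qed

end


definition app_row :: "'a mat \<Rightarrow> 'a vec \<Rightarrow> 'a mat" where
  "app_row N v = mat (Suc (dim_row N)) (dim_col N) (\<lambda>(i,j). if i < dim_row N then N $$ (i,j) else v $ j)"

definition drop_row :: "'a mat \<Rightarrow> 'a mat" where
  "drop_row M = mat (dim_row M - 1) (dim_col M) (\<lambda>(i,j). M $$ (i,j))"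

lemma app_row_carrier: "N \<in> carrier_mat k m \<Longrightarrow> app_row N v \<in> carrier_mat (Suc k) m"
  unfolding app_row_def by auto

lemma rows_app_row:
  assumes N: "N \<in> carrier_mat k m" and v: "v \<in> carrier_vec m"
  shows "set (rows (app_row N v)) = insert v (set (rows N))"
proof -
  have r1: "row (app_row N v) i = row N i" if "i < k" for i
    using N that by (intro eq_vecI) (auto simp: app_row_def)
  have r2: "row (app_row N v) k = v"
    using N v by (intro eq_vecI) (auto simp: app_row_def)
  have "set (rows (app_row N v)) = row (app_row N v) ` {0..<Suc k}"
  proof -
    have d: "dim_row (app_row N v) = Suc k" using app_row_carrier[OF N] by auto
    show ?thesis unfolding rows_def d set_map set_upt ..
  qed
  also have "{0..<Suc k} = insert k {0..<k}" by auto
  also have "row (app_row N v) ` insert k {0..<k} = insert v (row N ` {0..<k})"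
    using r1 r2 by auto
  also have "row N ` {0..<k} = set (rows N)" using N by (auto simp: rows_def)
  finally show ?thesis .
qed

lemma app_drop_row:
  assumes M: "M \<in> carrier_mat (Suc k) m"
  shows "drop_row M \<in> carrier_mat k m" "row M k \<in> carrier_vec m" "app_row (drop_row M) (row M k) = M"
  using M by (auto simp: drop_row_def app_row_def intro!: eq_matI simp: less_Suc_eq)

lemma app_row_inj:
  assumes "N \<in> carrier_mat k m" "v \<in> carrier_vec m" "N' \<in> carrier_mat k m" "v' \<in> carrier_vec m"
    and eq: "app_row N v = app_row N' v'"
  shows "N = N' \<and> v = v'"
proof
  show "N = N'"
  proof (rule eq_matI)
    fix i j assume "i < dim_row N'" "j < dim_col N'"
    then show "N $$ (i, j) = N' $$ (i, j)"
      using arg_cong[OF eq, of "\<lambda>M. M $$ (i,j)"] assms by (auto simp: app_row_def)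
  qed (use assms in auto)
  show "v = v'"
  proof (rule eq_vecI)
    fix j assume "j < dim_vec v'"
    then show "v $ j = v' $ j"
      using arg_cong[OF eq, of "\<lambda>M. M $$ (k,j)"] assms by (auto simp: app_row_def)
  qed (use assms in auto)
qed

lemma finite_carrier_mat:
  "finite (carrier_mat k m :: 'a::finite mat set)"
proof -
  have "inj_on (\<lambda>M. restrict (\<lambda>ij. M $$ ij) ({0..<k}\<times>{0..<m})) (carrier_mat k m :: 'a mat set)"
  proof (rule inj_onI)
    fix x y :: "'a mat" assume xy: "x \<in> carrier_mat k m" "y \<in> carrier_mat k m"
      and eq: "restrict (\<lambda>ij. x $$ ij) ({0..<k}\<times>{0..<m}) = restrict (\<lambda>ij. y $$ ij) ({0..<k}\<times>{0..<m})"
    show "x = y"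
    proof (rule eq_matI)
      fix i j assume "i < dim_row y" "j < dim_col y"
      then have "(i,j) \<in> {0..<k}\<times>{0..<m}" using xy by auto
      then show "x $$ (i,j) = y $$ (i,j)" using fun_cong[OF eq, of "(i,j)"] by simp
    qed (use xy in auto)
  qed
  moreover have "(\<lambda>M. restrict (\<lambda>ij. M $$ ij) ({0..<k}\<times>{0..<m})) ` (carrier_mat k m :: 'a mat set)
     \<subseteq> PiE ({0..<k}\<times>{0..<m}) (\<lambda>_. UNIV)" by (auto simp: restrict_def PiE_def extensional_def)
  moreover have "finite (PiE ({0..<k}\<times>{0..<m}) (\<lambda>_. UNIV :: 'a set))" by (simp add: finite_PiE)
  ultimately show ?thesis using finite_imageD finite_subset by metis
qed


lemma card_Vt:
  fixes N :: "'a::{finite,field} mat"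
  assumes N: "N \<in> carrier_mat k m" and t: "1 \<le> t"
  shows "card {v \<in> carrier_vec m. mrank (app_row N v) = t} =
    (if mrank N = t then card (UNIV::'a set) ^ t else 0) + (if mrank N = t - 1 then card (UNIV::'a set) ^ m - card (UNIV::'a set) ^ (t - 1) else 0)"
proof -
  interpret Vm: vec_space "TYPE('a)" m .
  define R where "R = set (rows N)"
  have R: "R \<subseteq> carrier_vec m" "finite R" using N by (auto simp: R_def rows_def)
  have rN: "mrank N = Vm.Dm R" using mrank_rows[OF N] by (simp add: R_def)
  have rA: "mrank (app_row N v) = Vm.Dm (insert v R)" if v: "v \<in> carrier_vec m" for v
    using mrank_rows[OF app_row_carrier[OF N]] rows_app_row[OF N v] by (simp add: R_def)
  have spc: "Vm.span R \<subseteq> carrier_vec m" using Vm.span_is_subset2[OF R(1)] by simp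
  have fin: "finite (UNIV :: 'a set)" by simp
  have cs: "card (Vm.span R) = card (UNIV::'a set) ^ Vm.Dm R" using Vm.card_span[OF fin R] by simp
  have fs: "finite (Vm.span R)" using finite_subset[OF spc Vm.card_carrier_vec_loc(2)[OF fin]] .
  show ?thesis
  proof (cases "mrank N = t")
    case True
    have "{v \<in> carrier_vec m. mrank (app_row N v) = t} = Vm.span R"
    proof (intro equalityI subsetI)
      fix v assume "v \<in> {v \<in> carrier_vec m. mrank (app_row N v) = t}"
      then have v: "v \<in> carrier_vec m" "Vm.Dm (insert v R) = t" using rA by auto
      show "v \<in> Vm.span R"
      proof (rule ccontr)
        assume "v \<notin> Vm.span R"
        then have "Vm.Dm (insert v R) = Suc (Vm.Dm R)" using Vm.Dm_insert(2)[OF R v(1)] by simp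
        then show False using v True rN by simp
      qed
    next
      fix v assume v: "v \<in> Vm.span R"
      then have "v \<in> carrier_vec m" using spc by auto
      then show "v \<in> {v \<in> carrier_vec m. mrank (app_row N v) = t}"
        using Vm.Dm_insert(1)[OF R _ v] rA True rN by auto
    qed
    then show ?thesis using cs True rN t by simp
  next
    case False
    show ?thesis
    proof (cases "mrank N = t - 1")
      case True
      have "{v \<in> carrier_vec m. mrank (app_row N v) = t} = carrier_vec m - Vm.span R"
      proof (intro equalityI subsetI)
        fix v assume "v \<in> {v \<in> carrier_vec m. mrank (app_row N v) = t}"
        then have v: "v \<in> carrier_vec m" "Vm.Dm (insert v R) = t" using rA by auto
        have "v \<notin> Vm.span R"
        proof
          assume "v \<in> Vm.span R"
          then have "Vm.Dm (insert v R) = Vm.Dm R" using Vm.Dm_insert(1)[OF R v(1)] by simp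
          then show False using v False rN by simp
        qed
        then show "v \<in> carrier_vec m - Vm.span R" using v by auto
      next
        fix v assume v: "v \<in> carrier_vec m - Vm.span R"
        then have "Vm.Dm (insert v R) = Suc (Vm.Dm R)" using Vm.Dm_insert(2)[OF R] by auto
        then show "v \<in> {v \<in> carrier_vec m. mrank (app_row N v) = t}"
          using v rA True rN t by auto
      qed
      then have "card {v \<in> carrier_vec m. mrank (app_row N v) = t} = card (UNIV::'a set) ^ m - card (UNIV::'a set) ^ (t - 1)"
        using card_Diff_subset[OF fs spc] Vm.card_carrier_vec_loc(1)[OF fin] cs True rN by simp
      then show ?thesis using False True by simp
    next
      case False2: False
      have "{v \<in> carrier_vec m. mrank (app_row N v) = t} = {}"
      proof (intro equalityI subsetI)
        fix v assume "v \<in> {v \<in> carrier_vec m. mrank (app_row N v) = t}"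
        then have v: "v \<in> carrier_vec m" "Vm.Dm (insert v R) = t" using rA by auto
        then show "v \<in> {}"
          using Vm.Dm_insert[OF R v(1)] False False2 rN by (cases "v \<in> Vm.span R") auto
      qed auto
      then show ?thesis using False False2 by (simp del: Collect_empty_eq)
    qed
  qed
qed

lemma count_step:
  fixes X :: "'a::{finite,field} mat \<Rightarrow> bool"
  assumes X: "\<And>N v. N \<in> carrier_mat k m \<Longrightarrow> v \<in> carrier_vec m \<Longrightarrow> X (app_row N v) = X N"
    and t: "1 \<le> t"
  shows "card {M. M \<in> carrier_mat (Suc k) m \<and> mrank M = t \<and> X M}
    = card (UNIV::'a set) ^ t * card {N. N \<in> carrier_mat k m \<and> mrank N = t \<and> X N}
      + (card (UNIV::'a set) ^ m - card (UNIV::'a set) ^ (t - 1)) * card {N. N \<in> carrier_mat k m \<and> mrank N = t - 1 \<and> X N}"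
proof -
  interpret Vm: vec_space "TYPE('a)" m .
  have fin: "finite (UNIV :: 'a set)" by simp
  define A :: "'a mat set" where "A = {N. N \<in> carrier_mat k m \<and> X N}"
  define Vt where "Vt N = {v \<in> carrier_vec m. mrank (app_row N v) = t}" for N :: "'a mat"
  have finA: "finite A" unfolding A_def using finite_carrier_mat by (rule finite_subset[rotated]) auto
  have finV: "finite (Vt N)" for N
    unfolding Vt_def by (rule finite_subset[OF _ Vm.card_carrier_vec_loc(2)[OF fin]]) auto
  have eq: "{M. M \<in> carrier_mat (Suc k) m \<and> mrank M = t \<and> X M} = (\<lambda>(N,v). app_row N v) ` Sigma A Vt"
  proof (intro equalityI subsetI)
    fix M assume "M \<in> {M. M \<in> carrier_mat (Suc k) m \<and> mrank M = t \<and> X M}"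
    then have M: "M \<in> carrier_mat (Suc k) m" "mrank M = t" "X M" by auto
    note d = app_drop_row[OF M(1)]
    have "(drop_row M, row M k) \<in> Sigma A Vt"
      using d M X[OF d(1,2)] by (auto simp: A_def Vt_def)
    then show "M \<in> (\<lambda>(N,v). app_row N v) ` Sigma A Vt" using d(3) by force
  next
    fix M assume "M \<in> (\<lambda>(N,v). app_row N v) ` Sigma A Vt"
    then obtain N v where Nv: "N \<in> A" "v \<in> Vt N" "M = app_row N v" by auto
    then show "M \<in> {M. M \<in> carrier_mat (Suc k) m \<and> mrank M = t \<and> X M}"
      using app_row_carrier X by (auto simp: A_def Vt_def)
  qed
  have inj: "inj_on (\<lambda>(N,v). app_row N v) (Sigma A Vt)"
  proof (rule inj_onI)
    fix x y assume x: "x \<in> Sigma A Vt" and y: "y \<in> Sigma A Vt"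
      and e: "(\<lambda>(N,v). app_row N v) x = (\<lambda>(N,v). app_row N v) y"
    obtain N v where xx: "x = (N,v)" by (cases x)
    obtain N' v' where yy: "y = (N',v')" by (cases y)
    have "N \<in> carrier_mat k m" "v \<in> carrier_vec m" "N' \<in> carrier_mat k m" "v' \<in> carrier_vec m"
      using x y xx yy by (auto simp: A_def Vt_def)
    from app_row_inj[OF this] e xx yy show "x = y" by simp
  qed
  have "card {M. M \<in> carrier_mat (Suc k) m \<and> mrank M = t \<and> X M} = card (Sigma A Vt)"
    unfolding eq using card_image[OF inj] .
  also have "\<dots> = (\<Sum>N\<in>A. card (Vt N))" by (rule card_SigmaI[OF finA]) (simp add: finV)
  also have "\<dots> = (\<Sum>N\<in>A. (if mrank N = t then card (UNIV::'a set) ^ t else 0)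
      + (if mrank N = t - 1 then card (UNIV::'a set) ^ m - card (UNIV::'a set) ^ (t - 1) else 0))"
  proof (rule sum.cong[OF refl])
    fix N assume "N \<in> A"
    then have "N \<in> carrier_mat k m" by (simp add: A_def)
    then show "card (Vt N) = (if mrank N = t then card (UNIV::'a set) ^ t else 0)
      + (if mrank N = t - 1 then card (UNIV::'a set) ^ m - card (UNIV::'a set) ^ (t - 1) else 0)"
      unfolding Vt_def by (rule card_Vt[OF _ t])
  qed
  also have "\<dots> = (\<Sum>N\<in>{N\<in>A. mrank N = t}. card (UNIV::'a set) ^ t)
      + (\<Sum>N\<in>{N\<in>A. mrank N = t - 1}. card (UNIV::'a set) ^ m - card (UNIV::'a set) ^ (t - 1))"
    by (simp only: sum.distrib sum.inter_filter[OF finA])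
  also have "\<dots> = card (UNIV::'a set) ^ t * card {N. N \<in> carrier_mat k m \<and> mrank N = t \<and> X N}
      + (card (UNIV::'a set) ^ m - card (UNIV::'a set) ^ (t - 1)) * card {N. N \<in> carrier_mat k m \<and> mrank N = t - 1 \<and> X N}"
  proof -
    have "{N\<in>A. mrank N = t} = {N. N \<in> carrier_mat k m \<and> mrank N = t \<and> X N}"
         "{N\<in>A. mrank N = t - 1} = {N. N \<in> carrier_mat k m \<and> mrank N = t - 1 \<and> X N}"
      by (auto simp: A_def)
    then show ?thesis by (simp add: mult.commute)
  qed
  finally show ?thesis .
qed


lemma tau_app_row:
  assumes N: "N \<in> carrier_mat k m" and r: "r \<le> k" "r \<le> m"
  shows "tau r (app_row N v) = tau r N"
  unfolding tau_def using N r by (intro sum.cong) (auto simp: app_row_def)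

lemma top_rows_app_row:
  assumes N: "N \<in> carrier_mat k m" and r: "r \<le> k"
  shows "top_rows r (app_row N v) = top_rows r N"
  unfolding top_rows_def using N r by (intro eq_matI) (auto simp: app_row_def)

theorem mainTheorem14:
  fixes F :: "'a::{finite,field} itself" and r s t l m :: nat
  defines "q \<equiv> card (UNIV :: 'a set)"
  assumes "1 \<le> t" "t \<le> l" "l \<le> m" "1 \<le> r" "r < l" "1 \<le> s" "s \<le> t"
  shows "ws_count F r s t l m
           = q ^ t * ws_count F r s t (l - 1) m + (q ^ m - q ^ (t - 1)) * ws_count F r s (t - 1) (l - 1) m
         \<and> w_count F r t l m
           = q ^ t * w_count F r t (l - 1) m + (q ^ m - q ^ (t - 1)) * w_count F r (t - 1) (l - 1) m"
proof -
  obtain k where l: "l = Suc k" using assms(6) by (cases l) auto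
  have rk: "r \<le> k" "r \<le> m" using assms l by auto
  have 1: "card {M :: 'a mat. M \<in> carrier_mat (Suc k) m \<and> mrank M = t \<and> (tau r M \<noteq> 0 \<and> mrank (top_rows r M) = s)}
    = q ^ t * card {N :: 'a mat. N \<in> carrier_mat k m \<and> mrank N = t \<and> (tau r N \<noteq> 0 \<and> mrank (top_rows r N) = s)}
      + (q ^ m - q ^ (t - 1)) * card {N :: 'a mat. N \<in> carrier_mat k m \<and> mrank N = t - 1 \<and> (tau r N \<noteq> 0 \<and> mrank (top_rows r N) = s)}"
    unfolding q_def
    by (rule count_step[OF _ assms(2)]) (simp add: tau_app_row[OF _ rk] top_rows_app_row[OF _ rk(1)])
  have 2: "card {M :: 'a mat. M \<in> carrier_mat (Suc k) m \<and> mrank M = t \<and> tau r M \<noteq> 0}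
    = q ^ t * card {N :: 'a mat. N \<in> carrier_mat k m \<and> mrank N = t \<and> tau r N \<noteq> 0}
      + (q ^ m - q ^ (t - 1)) * card {N :: 'a mat. N \<in> carrier_mat k m \<and> mrank N = t - 1 \<and> tau r N \<noteq> 0}"
    unfolding q_def
    by (rule count_step[OF _ assms(2)]) (simp add: tau_app_row[OF _ rk])
  show ?thesis using 1 2 unfolding ws_count_def w_count_def l by simp
qed

end
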